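(* Let $\Phi$ be an irreducible crystallographic root system with simple system $S$ and positive system $\Phi^+$, let $k$ be a positive integer, and let $\mathcal{I}=(I_1,\ldots,I_k)$ be a geometric chain of $k$ ideals in the root poset of $\Phi$. Define $\underline{\mathcal{I}}=(\underline{I}_1,\ldots,\underline{I}_{k+1})$ by $\underline{I}_i=I_i$ for $i\in\{1,\ldots,k\}$ and $\underline{I}_{k+1}=\bigcup_{i+j=k+1}\big((I_i+I_j)\cap\Phi^+\big)\cup I_k\cup S$. Then $\underline{\mathcal{I}}$ is a positive geometric chain of $k+1$ ideals, and the bounded dominant region $\underline{R}=\theta^{-1}(\underline{\mathcal{I}})$ of the $(k+1)$-Catalan arrangement of $\Phi$ is contained in the dominant region $R=\theta^{-1}(\mathcal{I})$ of the $k$-Catalan arrangement.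
   Context: $\Phi$ lives in a real Euclidean space $V$ with inner product $\langle\cdot,\cdot\rangle$; $H_\alpha^r=\{x\in V\mid\langle x,\alpha\rangle=r\}$. For a positive integer $K$, the $K$-Catalan arrangement consists of $H_\alpha^r$, $\alpha\in\Phi$, $r\in\{0,\ldots,K\}$; regions are connected components of its complement; $R$ is dominant if $\langle x,\alpha\rangle>0$ for all $\alpha\in\Phi^+$, $x\in R$. The root poset is $\Phi^+$ with $\alpha\le\beta$ iff $\beta-\alpha$ is a nonnegative integer combination of $S$; ideals are down-closed subsets, order filters up-closed subsets. Sums of sets are sumsets $A+B=\{a+b\mid a\in A,b\in B\}$. An ascending chain $I_1\subseteq\cdots\subseteq I_K$ of ideals, with corresponding order filters $J_i=\Phi^+\setminus I_i$, is geometric if $(I_i+I_j)\cap\Phi^+\subseteq I_{i+j}$ for all $i,j\in\{0,\ldots,K\}$ with $i+j\le K$, and $(J_i+J_j)\cap\Phi^+\subseteq J_{i+j}$ for all $i,j\in\{0,\ldots,K\}$, where $I_0=\varnothing$, $J_0=\Phi^+$ and $J_i=J_K$ for $i>K$. It is positive if $S\subseteq I_K$. For a dominant region $R$ of the $K$-Catalan arrangement, $\theta(R)=(I_1,\ldots,I_K)$ with $I_i=\{\alpha\in\Phi^+\mid\langle x,\alpha\rangle<i\text{ for all }x\in R\}$; it is known that $\theta$ is a bijection from dominant regions of the $K$-Catalan arrangement to geometric chains of $K$ ideals, restricting to a bijection between bounded dominant regions and positive geometric chains. In the union defining $\underline{I}_{k+1}$, $i,j$ range over $\{0,\ldots,k\}$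 with $I_0=\varnothing$. *)

theory Defs
  imports "HOL-Analysis.Analysis"
begin

definition refl_vec :: "'a::euclidean_space \<Rightarrow> 'a \<Rightarrow> 'a" where
  "refl_vec \<alpha> \<beta> = \<beta> - (2 * (\<beta> \<bullet> \<alpha>) / (\<alpha> \<bullet> \<alpha>)) *\<^sub>R \<alpha>"

definition crystallographic_root_system :: "'a::euclidean_space set \<Rightarrow> bool" where
  "crystallographic_root_system \<Phi> \<longleftrightarrow>
     finite \<Phi> \<and> 0 \<notin> \<Phi> \<and> span \<Phi> = UNIV \<and>
     (\<forall>\<alpha>\<in>\<Phi>. \<forall>c::real. c *\<^sub>R \<alpha> \<in> \<Phi> \<longrightarrow> c = 1 \<or> c = -1) \<and>
     (\<forall>\<alpha>\<in>\<Phi>. \<forall>\<beta>\<in>\<Phi>. refl_vec \<alpha> \<beta> \<in> \<Phi>) \<and>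
     (\<forall>\<alpha>\<in>\<Phi>. \<forall>\<beta>\<in>\<Phi>. 2 * (\<beta> \<bullet> \<alpha>) / (\<alpha> \<bullet> \<alpha>) \<in> \<int>)"

definition irreducible_root_system :: "'a::euclidean_space set \<Rightarrow> bool" where
  "irreducible_root_system \<Phi> \<longleftrightarrow>
     \<not> (\<exists>A B. A \<noteq> {} \<and> B \<noteq> {} \<and> A \<union> B = \<Phi> \<and> A \<inter> B = {} \<and>
            (\<forall>a\<in>A. \<forall>b\<in>B. a \<bullet> b = 0))"

definition simple_system :: "'a::euclidean_space set \<Rightarrow> 'a set \<Rightarrow> bool" where
  "simple_system \<Phi> S \<longleftrightarrow>
     S \<subseteq> \<Phi> \<and> independent S \<and> span S = UNIV \<and>
     (\<forall>\<alpha>\<in>\<Phi>. \<exists>c::'a \<Rightarrow> real. \<alpha> = (\<Sum>s\<in>S. c s *\<^sub>R s) \<and>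
                 ((\<forall>s\<in>S. c s \<ge> 0) \<or> (\<forall>s\<in>S. c s \<le> 0)))"

definition positive_roots :: "'a::euclidean_space set \<Rightarrow> 'a set \<Rightarrow> 'a set" where
  "positive_roots \<Phi> S =
     {\<alpha>\<in>\<Phi>. \<exists>c::'a \<Rightarrow> real. \<alpha> = (\<Sum>s\<in>S. c s *\<^sub>R s) \<and> (\<forall>s\<in>S. c s \<ge> 0)}"

definition root_le :: "'a::euclidean_space set \<Rightarrow> 'a \<Rightarrow> 'a \<Rightarrow> bool" where
  "root_le S \<alpha> \<beta> \<longleftrightarrow> (\<exists>n::'a \<Rightarrow> nat. \<beta> - \<alpha> = (\<Sum>s\<in>S. real (n s) *\<^sub>R s))"

definition root_ideal :: "'a::euclidean_space set \<Rightarrow> 'a set \<Rightarrow> 'a set \<Rightarrow> bool" where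
  "root_ideal \<Phi> S I \<longleftrightarrow>
     I \<subseteq> positive_roots \<Phi> S \<and>
     (\<forall>\<beta>\<in>I. \<forall>\<alpha>\<in>positive_roots \<Phi> S. root_le S \<alpha> \<beta> \<longrightarrow> \<alpha> \<in> I)"

definition sumset :: "'a::ab_group_add set \<Rightarrow> 'a set \<Rightarrow> 'a set" where
  "sumset A B = {a + b | a b. a \<in> A \<and> b \<in> B}"

section \<open>Chains of ideals (indexed 1..K; values outside are irrelevant)\<close>

definition Iext :: "(nat \<Rightarrow> 'a set) \<Rightarrow> nat \<Rightarrow> 'a set" where
  "Iext I i = (if i = 0 then {} else I i)"

definition Jext :: "'a::euclidean_space set \<Rightarrow> 'a set \<Rightarrow> nat \<Rightarrow> (nat \<Rightarrow> 'a set) \<Rightarrow> nat \<Rightarrow> 'a set" where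
  "Jext \<Phi> S K I i = (if i = 0 then positive_roots \<Phi> S
                       else positive_roots \<Phi> S - I (min i K))"

definition geometric_chain ::
  "'a::euclidean_space set \<Rightarrow> 'a set \<Rightarrow> nat \<Rightarrow> (nat \<Rightarrow> 'a set) \<Rightarrow> bool" where
  "geometric_chain \<Phi> S K I \<longleftrightarrow>
     (\<forall>i\<in>{1..K}. root_ideal \<Phi> S (I i)) \<and>
     (\<forall>i. 1 \<le> i \<and> i < K \<longrightarrow> I i \<subseteq> I (Suc i)) \<and>
     (\<forall>i\<le>K. \<forall>j\<le>K. i + j \<le> K \<longrightarrow>
        sumset (Iext I i) (Iext I j) \<inter> positive_roots \<Phi> S \<subseteq> Iext I (i + j)) \<and>
     (\<forall>i\<le>K. \<forall>j\<le>K.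
        sumset (Jext \<Phi> S K I i) (Jext \<Phi> S K I j) \<inter> positive_roots \<Phi> S
          \<subseteq> Jext \<Phi> S K I (i + j))"

definition positive_chain :: "'a set \<Rightarrow> nat \<Rightarrow> (nat \<Rightarrow> 'a set) \<Rightarrow> bool" where
  "positive_chain S K I \<longleftrightarrow> S \<subseteq> I K"

definition catalan_complement :: "'a::euclidean_space set \<Rightarrow> nat \<Rightarrow> 'a set" where
  "catalan_complement \<Phi> K =
     UNIV - {x. \<exists>\<alpha>\<in>\<Phi>. \<exists>r\<in>{0..K}. x \<bullet> \<alpha> = real r}"

definition catalan_region :: "'a::euclidean_space set \<Rightarrow> nat \<Rightarrow> 'a set \<Rightarrow> bool" where
  "catalan_region \<Phi> K R \<longleftrightarrow>
     (\<exists>x\<in>catalan_complement \<Phi> K. R = connected_component_set (catalan_complement \<Phi> K) x)"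

definition dominant :: "'a::euclidean_space set \<Rightarrow> 'a set \<Rightarrow> 'a set \<Rightarrow> bool" where
  "dominant \<Phi> S R \<longleftrightarrow> (\<forall>x\<in>R. \<forall>\<alpha>\<in>positive_roots \<Phi> S. x \<bullet> \<alpha> > 0)"

definition theta :: "'a::euclidean_space set \<Rightarrow> 'a set \<Rightarrow> 'a set \<Rightarrow> nat \<Rightarrow> 'a set" where
  "theta \<Phi> S R i = {\<alpha>\<in>positive_roots \<Phi> S. \<forall>x\<in>R. x \<bullet> \<alpha> < real i}"

definition chain_ext :: "'a::euclidean_space set \<Rightarrow> 'a set \<Rightarrow> nat \<Rightarrow> (nat \<Rightarrow> 'a set) \<Rightarrow> nat \<Rightarrow> 'a set" where
  "chain_ext \<Phi> S k I i =
     (if i \<le> k then I i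
      else (\<Union>i'\<in>{0..k}. \<Union>j'\<in>{0..k}.
              if i' + j' = k + 1
              then sumset (Iext I i') (Iext I j') \<inter> positive_roots \<Phi> S else {})
           \<union> I k \<union> S)"

end

theory Submission
  imports Defs
begin

locale rsys =
  fixes \<Phi> S :: "'a::euclidean_space set"
  assumes crs: "crystallographic_root_system \<Phi>"
    and ss: "simple_system \<Phi> S"
begin

abbreviation "P \<equiv> positive_roots \<Phi> S"

lemma finPhi: "finite \<Phi>" and zPhi: "0 \<notin> \<Phi>"
  and red: "\<And>\<alpha> c. \<alpha> \<in> \<Phi> \<Longrightarrow> c *\<^sub>R \<alpha> \<in> \<Phi> \<Longrightarrow> c = 1 \<or> c = -1"
  and reflc: "\<And>\<alpha> \<beta>. \<alpha> \<in> \<Phi> \<Longrightarrow> \<beta> \<in> \<Phi> \<Longrightarrow> refl_vec \<alpha> \<beta> \<in> \<Phi>"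
  and intc: "\<And>\<alpha> \<beta>. \<alpha> \<in> \<Phi> \<Longrightarrow> \<beta> \<in> \<Phi> \<Longrightarrow> 2 * (\<beta> \<bullet> \<alpha>) / (\<alpha> \<bullet> \<alpha>) \<in> \<int>"
  using crs unfolding crystallographic_root_system_def by auto

lemma SPhi: "S \<subseteq> \<Phi>" and indS: "independent S"
  and sgn: "\<And>\<alpha>. \<alpha> \<in> \<Phi> \<Longrightarrow> \<exists>c::'a \<Rightarrow> real. \<alpha> = (\<Sum>s\<in>S. c s *\<^sub>R s) \<and>
                 ((\<forall>s\<in>S. c s \<ge> 0) \<or> (\<forall>s\<in>S. c s \<le> 0))"
  using ss unfolding simple_system_def by auto

lemma finS: "finite S" using SPhi finPhi finite_subset by blast

lemma nonzero: "\<alpha> \<in> \<Phi> \<Longrightarrow> \<alpha> \<bullet> \<alpha> > 0"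
  using zPhi inner_gt_zero_iff by blast

lemma neg: assumes "\<alpha> \<in> \<Phi>" shows "- \<alpha> \<in> \<Phi>"
proof -
  have "refl_vec \<alpha> \<alpha> = - \<alpha>" using nonzero[OF assms]
    unfolding refl_vec_def by (simp add: scaleR_2 )
  thus ?thesis using reflc[OF assms assms] by simp
qed

lemma PPhi: "\<alpha> \<in> P \<Longrightarrow> \<alpha> \<in> \<Phi>" unfolding positive_roots_def by auto

lemma Pcoef: "\<alpha> \<in> P \<Longrightarrow> \<exists>c. \<alpha> = (\<Sum>s\<in>S. c s *\<^sub>R s) \<and> (\<forall>s\<in>S. c s \<ge> 0)"
  unfolding positive_roots_def by auto

lemma PI: "\<alpha> \<in> \<Phi> \<Longrightarrow> \<alpha> = (\<Sum>s\<in>S. c s *\<^sub>R s) \<Longrightarrow> (\<forall>s\<in>S. c s \<ge> 0) \<Longrightarrow> \<alpha> \<in> P"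
  unfolding positive_roots_def by auto

lemma posneg: assumes "\<alpha> \<in> \<Phi>" shows "\<alpha> \<in> P \<or> - \<alpha> \<in> P"
proof -
  obtain c where c: "\<alpha> = (\<Sum>s\<in>S. c s *\<^sub>R s)" "(\<forall>s\<in>S. c s \<ge> 0) \<or> (\<forall>s\<in>S. c s \<le> 0)"
    using sgn[OF assms] by blast
  show ?thesis
  proof (cases "\<forall>s\<in>S. c s \<ge> 0")
    case True thus ?thesis using PI assms c by blast
  next
    case False
    hence "\<forall>s\<in>S. - c s \<ge> 0" using c by auto
    moreover have "- \<alpha> = (\<Sum>s\<in>S. (- c s) *\<^sub>R s)" using c by (simp add: sum_negf)
    ultimately show ?thesis using PI[of "-\<alpha>" "\<lambda>s. - c s"] neg[OF assms] by blast
  qed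
qed

lemma uniq0: assumes "(\<Sum>s\<in>S. e s *\<^sub>R s) = 0" "t \<in> S" shows "e t = 0"
  using indS dependent_finite[OF finS] assms by blast

lemma simple_delta: assumes "t \<in> S" shows "(\<Sum>s\<in>S. (if s = t then 1 else 0) *\<^sub>R s) = t"
proof -
  have "(\<Sum>s\<in>S. (if s = t then 1 else 0) *\<^sub>R s) = (\<Sum>s\<in>S. if s = t then s else 0)"
    by (rule sum.cong) auto
  also have "\<dots> = t" using finS assms by (simp add: sum.delta')
  finally show ?thesis .
qed

lemma SP: "S \<subseteq> P"
proof
  fix t assume t: "t \<in> S"
  show "t \<in> P" by (rule PI[of t "\<lambda>s. if s = t then 1 else 0"]) (use t SPhi simple_delta in auto)
qed

lemma notboth: assumes "\<alpha> \<in> P" "- \<alpha> \<in> P" shows False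
proof -
  obtain c d where c: "\<alpha> = (\<Sum>s\<in>S. c s *\<^sub>R s)" "\<forall>s\<in>S. c s \<ge> 0"
    and d: "- \<alpha> = (\<Sum>s\<in>S. d s *\<^sub>R s)" "\<forall>s\<in>S. d s \<ge> 0"
    using Pcoef[OF assms(1)] Pcoef[OF assms(2)] by blast
  have "(\<Sum>s\<in>S. (c s + d s) *\<^sub>R s) = (\<Sum>s\<in>S. c s *\<^sub>R s) + (\<Sum>s\<in>S. d s *\<^sub>R s)"
    by (simp add: scaleR_add_left sum.distrib)
  also have "\<dots> = \<alpha> + - \<alpha>" using c(1) d(1) by simp
  finally have "(\<Sum>s\<in>S. (c s + d s) *\<^sub>R s) = 0" by simp
  hence "\<forall>t\<in>S. c t + d t = 0" using uniq0[of "\<lambda>s. c s + d s"] by blast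
  hence "\<forall>t\<in>S. c t = 0" using c d by force
  hence "\<alpha> = 0" using c by simp
  thus False using assms PPhi zPhi by blast
qed

lemma sum_single: assumes "t \<in> S" "\<forall>u\<in>S. u \<noteq> t \<longrightarrow> f u = 0" shows "(\<Sum>u\<in>S. f u) = f t"
proof -
  have "(\<Sum>u\<in>S. f u) = f t + (\<Sum>u\<in>S - {t}. f u)" by (rule sum.remove[OF finS assms(1)])
  also have "(\<Sum>u\<in>S - {t}. f u) = 0" using assms(2) by (intro sum.neutral) auto
  finally show ?thesis by simp
qed

lemma simple_not_sum: assumes "s \<in> S" "\<alpha> \<in> P" "\<beta> \<in> P" "s = \<alpha> + \<beta>" shows False
proof -
  obtain c d where c: "\<alpha> = (\<Sum>s\<in>S. c s *\<^sub>R s)" "\<forall>s\<in>S. c s \<ge> 0"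
    and d: "\<beta> = (\<Sum>s\<in>S. d s *\<^sub>R s)" "\<forall>s\<in>S. d s \<ge> 0"
    using Pcoef[OF assms(2)] Pcoef[OF assms(3)] by blast
  have "(\<Sum>t\<in>S. (c t + d t - (if t = s then 1 else 0)) *\<^sub>R t)
      = (\<Sum>t\<in>S. c t *\<^sub>R t) + (\<Sum>t\<in>S. d t *\<^sub>R t) - (\<Sum>t\<in>S. (if t = s then 1 else 0) *\<^sub>R t)"
    by (simp add: scaleR_add_left scaleR_diff_left sum.distrib sum_subtractf)
  also have "\<dots> = \<alpha> + \<beta> - s" using c(1) d(1) simple_delta[OF assms(1)] by simp
  also have "\<dots> = 0" using assms(4) by simp
  finally have "(\<Sum>t\<in>S. (c t + d t - (if t = s then 1 else 0)) *\<^sub>R t) = 0" .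
  hence z: "\<forall>t\<in>S. c t + d t - (if t = s then 1 else 0) = 0"
    using uniq0[of "\<lambda>t. c t + d t - (if t = s then 1 else 0)"] by blast
  have one: "\<gamma> = s" if "\<gamma> \<in> P" "\<gamma> = (\<Sum>s\<in>S. e s *\<^sub>R s)" "\<forall>s\<in>S. e s \<ge> 0"
    "\<forall>t\<in>S. t \<noteq> s \<longrightarrow> e t = 0" for \<gamma> e
  proof -
    have "\<gamma> = e s *\<^sub>R s" using that(2,4) sum_single[OF assms(1), of "\<lambda>t. e t *\<^sub>R t"] by simp
    hence e: "\<gamma> = e s *\<^sub>R s" .
    have "e s *\<^sub>R s \<in> \<Phi>" using e that(1) PPhi by simp
    hence "e s = 1 \<or> e s = -1" using red[of s "e s"] assms(1) SPhi by blast
    moreover have "e s \<ge> 0" using that(3) assms(1) by blast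
    ultimately have "e s = 1" by linarith
    thus ?thesis using e by simp
  qed
  have cz: "\<forall>t\<in>S. t \<noteq> s \<longrightarrow> c t = 0" and dz: "\<forall>t\<in>S. t \<noteq> s \<longrightarrow> d t = 0"
  proof (safe)
    fix t assume "t \<in> S" "t \<noteq> s"
    hence "c t + d t = 0" using z by force
    thus "c t = 0" "d t = 0" using c(2) d(2) \<open>t \<in> S\<close> by (meson add_nonneg_eq_0_iff)+
  qed
  have "\<alpha> = s" using one[OF assms(2) c cz] .
  moreover have "\<beta> = s" using one[OF assms(3) d dz] .
  ultimately have "s = s + s" using assms(4) by metis
  hence "s = 0" by simp
  thus False using assms(1) SPhi zPhi by blast
qed

lemma collin: assumes "\<alpha> \<in> \<Phi>" "\<beta> \<in> \<Phi>" "\<bar>\<alpha> \<bullet> \<beta>\<bar> = norm \<alpha> * norm \<beta>"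
  shows "\<beta> = \<alpha> \<or> \<beta> = - \<alpha>"
proof -
  have na: "norm \<alpha> > 0" "norm \<beta> > 0" using assms zPhi by auto
  have "norm \<alpha> *\<^sub>R \<beta> = norm \<beta> *\<^sub>R \<alpha> \<or> norm \<alpha> *\<^sub>R \<beta> = - norm \<beta> *\<^sub>R \<alpha>"
    using assms(3) norm_cauchy_schwarz_abs_eq by blast
  thus ?thesis
  proof
    assume h: "norm \<alpha> *\<^sub>R \<beta> = norm \<beta> *\<^sub>R \<alpha>"
    define c where "c = norm \<beta> / norm \<alpha>"
    have "\<beta> = (1 / norm \<alpha>) *\<^sub>R (norm \<alpha> *\<^sub>R \<beta>)" using na by simp
    also have "\<dots> = c *\<^sub>R \<alpha>" using h by (simp add: c_def)
    finally have b: "\<beta> = c *\<^sub>R \<alpha>" .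
    have "c > 0" using na c_def by simp
    hence "c = 1" using red[OF assms(1), of c] b assms(2) by auto
    thus ?thesis using b by simp
  next
    assume h: "norm \<alpha> *\<^sub>R \<beta> = - norm \<beta> *\<^sub>R \<alpha>"
    define c where "c = - norm \<beta> / norm \<alpha>"
    have "\<beta> = (1 / norm \<alpha>) *\<^sub>R (norm \<alpha> *\<^sub>R \<beta>)" using na by simp
    also have "\<dots> = c *\<^sub>R \<alpha>" using h by (simp add: c_def)
    finally have b: "\<beta> = c *\<^sub>R \<alpha>" .
    have "c < 0" using na c_def by simp
    hence "c = -1" using red[OF assms(1), of c] b assms(2) by auto
    thus ?thesis using b by simp
  qed
qed

lemma notcollin: assumes "\<alpha> \<in> \<Phi>" "\<beta> \<in> \<Phi>" "\<beta> \<noteq> \<alpha>" "\<beta> \<noteq> - \<alpha>"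
  shows "\<bar>\<alpha> \<bullet> \<beta>\<bar> < norm \<alpha> * norm \<beta>"
proof -
  have "\<bar>\<alpha> \<bullet> \<beta>\<bar> \<noteq> norm \<alpha> * norm \<beta>" using collin[OF assms(1,2)] assms(3,4) by blast
  thus ?thesis using Cauchy_Schwarz_ineq2[of \<alpha> \<beta>] by linarith
qed

lemma int_small: fixes i j :: int assumes "i > 0" "j > 0" "i * j < 4" shows "i = 1 \<or> j = 1"
proof (rule ccontr)
  assume "\<not> ?thesis"
  hence "i \<ge> 2" "j \<ge> 2" using assms by auto
  hence "i * j \<ge> 2 * 2" by (intro mult_mono) auto
  thus False using assms by simp
qed

lemma RL: assumes "\<alpha> \<in> \<Phi>" "\<beta> \<in> \<Phi>" "\<alpha> \<bullet> \<beta> > 0" "\<alpha> \<noteq> \<beta>"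
  shows "\<alpha> - \<beta> \<in> \<Phi>"
proof -
  have aa: "\<alpha> \<bullet> \<alpha> > 0" "\<beta> \<bullet> \<beta> > 0" using nonzero assms(1,2) by auto
  have "\<beta> \<noteq> - \<alpha>"
  proof
    assume "\<beta> = - \<alpha>"
    hence "\<alpha> \<bullet> \<beta> = - (\<alpha> \<bullet> \<alpha>)" by simp
    thus False using aa assms(3) by linarith
  qed
  hence lt: "\<bar>\<alpha> \<bullet> \<beta>\<bar> < norm \<alpha> * norm \<beta>" using notcollin[OF assms(1,2)] assms(4) by blast
  have "(\<alpha> \<bullet> \<beta>)^2 = \<bar>\<alpha> \<bullet> \<beta>\<bar>^2" by simp
  also have "\<dots> < (norm \<alpha> * norm \<beta>)^2" by (rule power_strict_mono[OF lt]) auto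
  finally have "(\<alpha> \<bullet> \<beta>)^2 < (norm \<alpha> * norm \<beta>)^2" .
  also have "\<dots> = (\<alpha> \<bullet> \<alpha>) * (\<beta> \<bullet> \<beta>)" by (simp add: power_mult_distrib power2_norm_eq_inner)
  finally have sq: "(\<alpha> \<bullet> \<beta>)^2 < (\<alpha> \<bullet> \<alpha>) * (\<beta> \<bullet> \<beta>)" .
  define m where "m = 2 * (\<alpha> \<bullet> \<beta>) / (\<beta> \<bullet> \<beta>)"
  define n where "n = 2 * (\<beta> \<bullet> \<alpha>) / (\<alpha> \<bullet> \<alpha>)"
  have mi: "m \<in> \<int>" using intc[OF assms(2,1)] unfolding m_def .
  have ni: "n \<in> \<int>" using intc[OF assms(1,2)] unfolding n_def .
  obtain i where i: "m = of_int i" using mi Ints_cases by blast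
  obtain j where j: "n = of_int j" using ni Ints_cases by blast
  have mp: "m > 0" "n > 0" using aa assms(3) unfolding m_def n_def by (auto simp: inner_commute)
  have "m * n = 4 * (\<alpha> \<bullet> \<beta>)^2 / ((\<alpha> \<bullet> \<alpha>) * (\<beta> \<bullet> \<beta>))"
    unfolding m_def n_def by (simp add: inner_commute power2_eq_square)
  also have "\<dots> < 4" using sq aa by (simp add: divide_less_eq)
  finally have "m * n < 4" .
  hence "of_int (i * j) < (of_int 4 :: real)" using i j by simp
  hence "i * j < 4" by (simp only: of_int_less_iff)
  moreover have "i > 0" "j > 0" using mp i j by auto
  ultimately have "i = 1 \<or> j = 1" using int_small by blast
  thus ?thesis
  proof
    assume "i = 1"
    hence "refl_vec \<beta> \<alpha> = \<alpha> - \<beta>" using i assms(3) unfolding refl_vec_def m_def by (simp add: inner_commute)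
    thus ?thesis using reflc[OF assms(2,1)] by simp
  next
    assume "j = 1"
    hence "refl_vec \<alpha> \<beta> = \<beta> - \<alpha>" using j assms(3) unfolding refl_vec_def n_def by (simp add: inner_commute)
    hence "\<beta> - \<alpha> \<in> \<Phi>" using reflc[OF assms(1,2)] by simp
    from neg[OF this] show ?thesis by simp
  qed
qed

lemma L4: assumes "x \<in> \<Phi>" "y \<in> \<Phi>" "z \<in> \<Phi>" "w \<in> \<Phi>" "z + w \<in> \<Phi>" "x + y = z + w"
  "w \<bullet> w \<le> z \<bullet> z"
  shows "x = z \<or> x - z \<in> \<Phi> \<or> y = z \<or> y - z \<in> \<Phi>"
proof -
  have "w \<noteq> z"
  proof
    assume "w = z"
    hence "2 *\<^sub>R z \<in> \<Phi>" using assms(5) by (simp add: scaleR_2)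
    thus False using red[OF assms(3)] by force
  qed
  moreover have "w \<noteq> - z" using assms(5) zPhi by auto
  ultimately have lt: "\<bar>z \<bullet> w\<bar> < norm z * norm w" using notcollin[OF assms(3,4)] by blast
  have "norm w \<le> norm z" using assms(7) by (simp add: norm_eq_sqrt_inner)
  hence "norm z * norm w \<le> norm z * norm z" by (simp add: mult_left_mono)
  also have "\<dots> = z \<bullet> z" by (simp add: dot_square_norm power2_eq_square)
  finally have "z \<bullet> w > - (z \<bullet> z)" using lt by (simp add: abs_less_iff)
  hence "(x + y) \<bullet> z > 0" using assms(6) by (simp add: inner_add_left inner_add_right inner_commute)
  hence "x \<bullet> z > 0 \<or> y \<bullet> z > 0" by (simp add: inner_add_left) linarith
  thus ?thesis using RL[OF assms(1,3)] RL[OF assms(2,3)] by blast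
qed

lemma P_add_comb: assumes "\<alpha> \<in> P" "\<gamma> \<in> \<Phi>" "\<gamma> = \<alpha> + (\<Sum>s\<in>S. e s *\<^sub>R s)" "\<forall>s\<in>S. e s \<ge> 0"
  shows "\<gamma> \<in> P"
proof -
  obtain c where c: "\<alpha> = (\<Sum>s\<in>S. c s *\<^sub>R s)" "\<forall>s\<in>S. c s \<ge> 0" using Pcoef[OF assms(1)] by blast
  have "\<gamma> = (\<Sum>s\<in>S. (c s + e s) *\<^sub>R s)" using assms(3) c(1) by (simp add: scaleR_add_left sum.distrib)
  moreover have "\<forall>s\<in>S. c s + e s \<ge> 0" using c(2) assms(4) by (simp add: add_nonneg_nonneg)
  ultimately show ?thesis using PI[OF assms(2), of "\<lambda>s. c s + e s"] by blast
qed

lemma down_closed_aux: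
  assumes X: "X \<subseteq> P" and cl: "\<And>\<beta> s. \<beta> \<in> X \<Longrightarrow> s \<in> S \<Longrightarrow> \<beta> - s \<in> P \<Longrightarrow> \<beta> - s \<in> X"
  shows "\<forall>\<alpha> \<beta> n. sum n S = N \<longrightarrow> \<beta> \<in> X \<longrightarrow> \<alpha> \<in> P \<longrightarrow>
          \<beta> - \<alpha> = (\<Sum>s\<in>S. real (n s) *\<^sub>R s) \<longrightarrow> \<alpha> \<in> X"
proof (induction N)
  case 0
  show ?case
  proof (intro allI impI)
    fix \<alpha> \<beta> and n :: "'a \<Rightarrow> nat"
    assume h: "sum n S = 0" "\<beta> \<in> X" "\<alpha> \<in> P" "\<beta> - \<alpha> = (\<Sum>s\<in>S. real (n s) *\<^sub>R s)"
    have "\<forall>s\<in>S. n s = 0" using h(1) finS by simp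
    hence "\<beta> - \<alpha> = 0" using h(4) by simp
    thus "\<alpha> \<in> X" using h(2) by simp
  qed
next
  case (Suc M)
  show ?case
  proof (intro allI impI)
    fix \<alpha> \<beta> and n :: "'a \<Rightarrow> nat"
    assume h: "sum n S = Suc M" "\<beta> \<in> X" "\<alpha> \<in> P" "\<beta> - \<alpha> = (\<Sum>s\<in>S. real (n s) *\<^sub>R s)"
    show "\<alpha> \<in> X"
    proof (cases "\<beta> = \<alpha>")
      case True thus ?thesis using h(2) by simp
    next
      case False
      define d where "d = \<beta> - \<alpha>"
      have "d \<bullet> d > 0" using False d_def by simp
      also have "d \<bullet> d = (\<Sum>s\<in>S. real (n s) * (s \<bullet> d))"
        using h(4) unfolding d_def by (simp add: inner_sum_left)
      finally have "\<exists>t\<in>S. real (n t) * (t \<bullet> d) > 0"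
        by (metis (no_types, lifting) not_less sum_nonpos)
      then obtain t where t: "t \<in> S" "real (n t) * (t \<bullet> d) > 0" by blast
      have nt: "n t > 0" using t(2) by (metis mult_eq_0_iff of_nat_0 less_irrefl neq0_conv)
      have td: "t \<bullet> d > 0" using t(2) by (simp add: zero_less_mult_iff)
      define n' where "n' = n(t := n t - 1)"
      have rn: "\<forall>s\<in>S. real (n s) = real (n' s) + (if s = t then 1 else 0)"
        using nt unfolding n'_def by auto
      have "(\<Sum>s\<in>S. real (n s) *\<^sub>R s) = (\<Sum>s\<in>S. (real (n' s) + (if s = t then 1 else 0)) *\<^sub>R s)"
        using rn by (intro sum.cong) auto
      also have "\<dots> = (\<Sum>s\<in>S. real (n' s) *\<^sub>R s) + t"
        using simple_delta[OF t(1)] by (simp add: scaleR_add_left sum.distrib)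
      finally have sumeq: "\<beta> - \<alpha> = (\<Sum>s\<in>S. real (n' s) *\<^sub>R s) + t" using h(4) by simp
      have "sum n S = sum (\<lambda>s. n' s + (if s = t then 1 else 0)) S"
        using nt unfolding n'_def by (intro sum.cong) auto
      also have "\<dots> = sum n' S + 1" using t(1) finS by (simp add: sum.distrib sum.delta')
      finally have sn': "sum n' S = M" using h(1) by simp
      have IH: "\<And>\<alpha> \<beta>. \<beta> \<in> X \<Longrightarrow> \<alpha> \<in> P \<Longrightarrow> \<beta> - \<alpha> = (\<Sum>s\<in>S. real (n' s) *\<^sub>R s) \<Longrightarrow> \<alpha> \<in> X"
        using Suc.IH sn' by blast
      have nn: "\<forall>s\<in>S. real (n' s) \<ge> 0" by simp
      have bPhi: "\<beta> \<in> \<Phi>" using h(2) X PPhi by blast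
      have aPhi: "\<alpha> \<in> \<Phi>" using h(3) PPhi by blast
      have tPhi: "t \<in> \<Phi>" using t(1) SPhi by blast
      have tP: "t \<in> P" using t(1) SP by blast
      have "t \<bullet> \<beta> > 0 \<or> t \<bullet> \<alpha> < 0" using td unfolding d_def by (simp add: inner_diff_right) linarith
      thus ?thesis
      proof
        assume tb: "t \<bullet> \<beta> > 0"
        show ?thesis
        proof (cases "\<beta> = t")
          case True
          hence "\<alpha> + (\<Sum>s\<in>S. real (n' s) *\<^sub>R s) = 0" using sumeq by (simp add: algebra_simps)
          hence "- \<alpha> = (\<Sum>s\<in>S. real (n' s) *\<^sub>R s)" by (metis add.commute neg_eq_iff_add_eq_0)
          hence "- \<alpha> \<in> P" using PI[OF neg[OF aPhi], of "\<lambda>s. real (n' s)"] nn by blast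
          thus ?thesis using notboth h(3) by blast
        next
          case False
          hence bt: "\<beta> - t \<in> \<Phi>" using RL[OF bPhi tPhi] tb by (simp add: inner_commute)
          have "\<beta> - t = \<alpha> + (\<Sum>s\<in>S. real (n' s) *\<^sub>R s)" using sumeq by (simp add: algebra_simps)
          hence "\<beta> - t \<in> P" using P_add_comb[OF h(3) bt, of "\<lambda>s. real (n' s)"] nn by blast
          hence "\<beta> - t \<in> X" using cl[OF h(2) t(1)] by blast
          moreover have "(\<beta> - t) - \<alpha> = (\<Sum>s\<in>S. real (n' s) *\<^sub>R s)" using sumeq by (simp add: algebra_simps)
          ultimately show ?thesis using IH h(3) by blast
        qed
      next
        assume ta: "t \<bullet> \<alpha> < 0"
        have "\<alpha> \<noteq> - t" using notboth tP h(3) by auto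
        moreover have "\<alpha> \<bullet> (- t) > 0" using ta by (simp add: inner_commute)
        ultimately have at: "\<alpha> + t \<in> \<Phi>" using RL[OF aPhi neg[OF tPhi]] by simp
        have "\<alpha> + t = \<alpha> + (\<Sum>s\<in>S. (if s = t then 1 else 0) *\<^sub>R s)" using simple_delta[OF t(1)] by simp
        hence atP: "\<alpha> + t \<in> P" using P_add_comb[OF h(3) at, of "\<lambda>s. if s = t then 1 else 0"] by simp
        have "\<beta> - (\<alpha> + t) = (\<Sum>s\<in>S. real (n' s) *\<^sub>R s)" using sumeq by (simp add: algebra_simps)
        hence "\<alpha> + t \<in> X" using IH[OF h(2) atP] by blast
        from cl[OF this t(1)] show ?thesis using h(3) by simp
      qed
    qed
  qed
qed

lemma down_closed:
  assumes "X \<subseteq> P" "\<And>\<beta> s. \<beta> \<in> X \<Longrightarrow> s \<in> S \<Longrightarrow> \<beta> - s \<in> P \<Longrightarrow> \<beta> - s \<in> X"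
  shows "root_ideal \<Phi> S X"
  unfolding root_ideal_def
proof (intro conjI ballI impI)
  show "X \<subseteq> P" by fact
  fix \<beta> \<alpha> assume "\<beta> \<in> X" "\<alpha> \<in> P" "root_le S \<alpha> \<beta>"
  then obtain n where "\<beta> - \<alpha> = (\<Sum>s\<in>S. real (n s) *\<^sub>R s)" unfolding root_le_def by blast
  thus "\<alpha> \<in> X" using down_closed_aux[OF assms, of "sum n S"] \<open>\<beta> \<in> X\<close> \<open>\<alpha> \<in> P\<close> by blast
qed

lemma root_le_simple: "s \<in> S \<Longrightarrow> root_le S (\<beta> - s) \<beta>"
  unfolding root_le_def using simple_delta
  by (intro exI[of _ "\<lambda>t. if t = s then 1 else 0"]) (auto simp: if_distrib cong: if_cong)

end

locale gch = rsys +
  fixes k :: nat and I :: "nat \<Rightarrow> 'a set"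
  assumes k1: "k \<ge> 1" and gc: "geometric_chain \<Phi> S k I"
begin

lemma ideal: "1 \<le> i \<Longrightarrow> i \<le> k \<Longrightarrow> root_ideal \<Phi> S (I i)"
  using gc unfolding geometric_chain_def by auto

lemma IP: "1 \<le> i \<Longrightarrow> i \<le> k \<Longrightarrow> I i \<subseteq> P"
  using ideal unfolding root_ideal_def by blast

lemma ideal_down: assumes "1 \<le> i" "i \<le> k" "\<beta> \<in> I i" "s \<in> S" "\<beta> - s \<in> P"
  shows "\<beta> - s \<in> I i"
  using ideal[OF assms(1,2)] assms(3,5) root_le_simple[OF assms(4)] unfolding root_ideal_def by blast

lemma mono: assumes "1 \<le> a" "a \<le> b" "b \<le> k" shows "I a \<subseteq> I b"
  using assms
proof (induction b)
  case 0 thus ?case by simp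
next
  case (Suc b)
  show ?case
  proof (cases "a = Suc b")
    case True thus ?thesis by simp
  next
    case False
    hence "I a \<subseteq> I b" using Suc by simp
    moreover have "I b \<subseteq> I (Suc b)" using gc Suc.prems False unfolding geometric_chain_def by auto
    ultimately show ?thesis by blast
  qed
qed

lemma Isum: assumes "1 \<le> a" "1 \<le> r" "a + r \<le> k" "v \<in> I a" "t \<in> I r" "v + t \<in> P"
  shows "v + t \<in> I (a + r)"
proof -
  have "sumset (Iext I a) (Iext I r) \<inter> P \<subseteq> Iext I (a + r)"
    using gc assms(3) unfolding geometric_chain_def by auto
  moreover have "v + t \<in> sumset (Iext I a) (Iext I r)"
    using assms unfolding sumset_def Iext_def by auto
  ultimately show ?thesis using assms unfolding Iext_def by auto
qed

lemma Jc: assumes "i \<le> k" "j \<le> k" "u \<in> P" "v \<in> P" "u \<notin> Iext I i" "v \<notin> Iext I j" "u + v \<in> P"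
  shows "u + v \<notin> Iext I (min (i + j) k)"
proof -
  have "sumset (Jext \<Phi> S k I i) (Jext \<Phi> S k I j) \<inter> P \<subseteq> Jext \<Phi> S k I (i + j)"
    using gc assms(1,2) unfolding geometric_chain_def by auto
  moreover have "u \<in> Jext \<Phi> S k I i" using assms(1,3,5) unfolding Jext_def Iext_def by auto
  moreover have "v \<in> Jext \<Phi> S k I j" using assms(2,4,6) unfolding Jext_def Iext_def by auto
  ultimately have "u + v \<in> Jext \<Phi> S k I (i + j)" using assms(7) unfolding sumset_def by blast
  thus ?thesis unfolding Jext_def Iext_def using k1 by (auto split: if_splits)
qed

lemma Jsplit: assumes "u \<in> P" "v \<in> P" "t \<in> P" "u = v + t" "m \<le> k" "v \<notin> Iext I m"
  "1 \<le> n" "n \<le> k" "u \<in> I n"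
  shows "m < n \<and> t \<in> I (n - m)"
proof (cases "n \<le> m")
  case True
  have "u \<notin> Iext I (min (m + 0) k)"
    using Jc[of m 0, OF assms(5) _ assms(2,3) assms(6)] assms(1,4) unfolding Iext_def by auto
  moreover have "u \<in> I m" using mono[OF assms(7) True assms(5)] assms(9) by blast
  ultimately show ?thesis using True assms(5,7) unfolding Iext_def by auto
next
  case False
  have "t \<in> I (n - m)"
  proof (rule ccontr)
    assume "t \<notin> I (n - m)"
    hence "t \<notin> Iext I (n - m)" unfolding Iext_def by auto
    hence "u \<notin> Iext I (min (m + (n - m)) k)"
      using Jc[of m "n - m", OF assms(5) _ assms(2,3) assms(6)] assms(1,4,8) False by auto
    thus False using False assms(7,8,9) unfolding Iext_def by auto
  qed
  thus ?thesis using False by simp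
qed

definition Dec :: "'a \<Rightarrow> bool" where
  "Dec x \<longleftrightarrow> (\<exists>a b z w. 1 \<le> a \<and> 1 \<le> b \<and> a + b = k + 1 \<and> z \<in> I a \<and> w \<in> I b \<and> x = z + w)"

abbreviation "E \<equiv> chain_ext \<Phi> S k I (k + 1)"

lemma ext_le: "i \<le> k \<Longrightarrow> chain_ext \<Phi> S k I i = I i"
  unfolding chain_ext_def by simp

lemma ext_mem: "x \<in> E \<longleftrightarrow> x \<in> I k \<or> x \<in> S \<or> (x \<in> P \<and> Dec x)"
proof
  assume "x \<in> E"
  hence "x \<in> I k \<or> x \<in> S \<or> (\<exists>i\<in>{0..k}. \<exists>j\<in>{0..k}. i + j = k + 1 \<and> x \<in> sumset (Iext I i) (Iext I j) \<inter> P)"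
    unfolding chain_ext_def by (auto split: if_splits)
  thus "x \<in> I k \<or> x \<in> S \<or> (x \<in> P \<and> Dec x)"
  proof (elim disjE bexE conjE)
    fix i j assume "i + j = k + 1" "x \<in> sumset (Iext I i) (Iext I j) \<inter> P"
    then obtain z w where "z \<in> Iext I i" "w \<in> Iext I j" "x = z + w" "x \<in> P" unfolding sumset_def by blast
    hence "i \<noteq> 0" "j \<noteq> 0" "z \<in> I i" "w \<in> I j" unfolding Iext_def by (auto split: if_splits)
    hence "Dec x" unfolding Dec_def using \<open>i + j = k + 1\<close> \<open>x = z + w\<close>
      by (intro exI[of _ i] exI[of _ j] exI[of _ z] exI[of _ w]) auto
    thus ?thesis using \<open>x \<in> P\<close> by blast
  qed auto
next
  assume h: "x \<in> I k \<or> x \<in> S \<or> (x \<in> P \<and> Dec x)"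
  show "x \<in> E"
  proof -
    { assume "x \<in> P" "Dec x"
      then obtain a b z w where d: "1 \<le> a" "1 \<le> b" "a + b = k + 1" "z \<in> I a" "w \<in> I b" "x = z + w"
        unfolding Dec_def by blast
      hence "x \<in> sumset (Iext I a) (Iext I b) \<inter> P" using \<open>x \<in> P\<close> unfolding sumset_def Iext_def by auto
      moreover have "a \<in> {0..k}" "b \<in> {0..k}" using d by auto
      ultimately have "x \<in> E" using d(3) unfolding chain_ext_def by auto }
    thus ?thesis using h unfolding chain_ext_def by auto
  qed
qed

lemma EP: "E \<subseteq> P"
  using ext_mem IP[of k] k1 SP by blast

lemma cov_half: assumes "1 \<le> a" "1 \<le> b" "a + b = k + 1" "z \<in> I a" "w \<in> I b"
  "\<eta> \<in> P" "s \<in> S" "\<eta> + s = z + w" "\<eta> = z \<or> \<eta> - z \<in> \<Phi> \<or> s = z \<or> s - z \<in> \<Phi>"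
  shows "\<eta> \<in> E"
proof -
  have ak: "a \<le> k" "b \<le> k" using assms(1-3) by auto
  have zP: "z \<in> P" and wP: "w \<in> P" using IP ak assms(1,2,4,5) by blast+
  have sP: "s \<in> P" using SP assms(7) by blast
  have Ik: "I a \<subseteq> I k" "I b \<subseteq> I k" using mono ak assms(1,2) by auto
  from assms(9) show ?thesis
  proof (elim disjE)
    assume "\<eta> = z" thus ?thesis using ext_mem Ik assms(4) by blast
  next
    assume r: "\<eta> - z \<in> \<Phi>"
    have eq: "\<eta> - z = w - s" using assms(8) by (simp add: algebra_simps)
    show ?thesis
    proof (cases "\<eta> - z \<in> P")
      case True
      hence "w - s \<in> I b" using ideal_down[OF assms(2) ak(2) assms(5,7)] eq by simp
      hence "Dec \<eta>" unfolding Dec_def using assms(1-4) eq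
        by (intro exI[of _ a] exI[of _ b] exI[of _ z] exI[of _ "w - s"]) (auto simp: algebra_simps)
      thus ?thesis using ext_mem assms(6) by blast
    next
      case False
      hence "- (\<eta> - z) \<in> P" using posneg[OF r] by blast
      moreover have "s = w + - (\<eta> - z)" using eq by (simp add: algebra_simps)
      ultimately show ?thesis using simple_not_sum[OF assms(7) wP] by blast
    qed
  next
    assume "s = z"
    hence "\<eta> = w" using assms(8) by simp
    thus ?thesis using ext_mem Ik assms(5) by blast
  next
    assume r: "s - z \<in> \<Phi>"
    show ?thesis
    proof (cases "s - z \<in> P")
      case True
      have "s = z + (s - z)" by simp
      thus ?thesis using simple_not_sum[OF assms(7) zP True] by blast
    next
      case False
      hence zs: "z - s \<in> P" using posneg[OF r] by simp
      hence "z - s \<in> I a" using ideal_down[OF assms(1) ak(1) assms(4,7)] by simp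
      moreover have "\<eta> = (z - s) + w" using assms(8) by (simp add: algebra_simps)
      ultimately have "Dec \<eta>" unfolding Dec_def using assms(1-3,5)
        by (intro exI[of _ a] exI[of _ b] exI[of _ "z - s"] exI[of _ w]) auto
      thus ?thesis using ext_mem assms(6) by blast
    qed
  qed
qed

lemma E_ideal: "root_ideal \<Phi> S E"
proof (rule down_closed[OF EP])
  fix \<beta> s assume h: "\<beta> \<in> E" "s \<in> S" "\<beta> - s \<in> P"
  have sP: "s \<in> P" using SP h(2) by blast
  from h(1)[unfolded ext_mem] show "\<beta> - s \<in> E"
  proof (elim disjE conjE)
    assume "\<beta> \<in> I k" thus ?thesis using ideal_down[OF k1 order_refl _ h(2,3)] ext_mem by blast
  next
    assume "\<beta> \<in> S"
    moreover have "\<beta> = (\<beta> - s) + s" by simp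
    ultimately show ?thesis using simple_not_sum h(3) sP by blast
  next
    assume bP: "\<beta> \<in> P" and "Dec \<beta>"
    then obtain a b z w where d: "1 \<le> a" "1 \<le> b" "a + b = k + 1" "z \<in> I a" "w \<in> I b" "\<beta> = z + w"
      unfolding Dec_def by blast
    have ak: "a \<le> k" "b \<le> k" using d by auto
    have zP: "z \<in> \<Phi>" and wP: "w \<in> \<Phi>" using IP ak d PPhi by blast+
    have eq: "(\<beta> - s) + s = z + w" using d by simp
    have x: "\<beta> - s \<in> \<Phi>" "s \<in> \<Phi>" "z + w \<in> \<Phi>" using h(3) sP bP d(6) PPhi by auto
    show ?thesis
    proof (cases "w \<bullet> w \<le> z \<bullet> z")
      case True
      from L4[OF x(1,2) zP wP x(3) eq True] show ?thesis
        using cov_half[OF d(1-5) h(3,2) eq] by blast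
    next
      case False
      have eq': "(\<beta> - s) + s = w + z" using eq by (simp add: add.commute)
      from L4[OF x(1,2) wP zP _ eq'] False x(3) show ?thesis
        using cov_half[OF d(2,1) _ d(5,4) h(3,2) eq'] d(3) by (auto simp: add.commute)
    qed
  qed
qed

lemma H1: assumes "1 \<le> a" "1 \<le> b" "a + b = k + 1" "z \<in> I a" "w \<in> I b"
  "1 \<le> p" "1 \<le> q" "p + q = k + 1" "x \<in> P" "y \<in> P" "x \<notin> I p" "y \<notin> I q"
  "x + y = z + w" "x = z \<or> x - z \<in> \<Phi>"
  shows False
proof -
  have ak: "a \<le> k" "b \<le> k" "p \<le> k" "q \<le> k" using assms(1-3,6-8) by auto
  have zP: "z \<in> P" and wP: "w \<in> P" using IP ak assms(1,2,4,5) by blast+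
  have yI: "y \<notin> Iext I q" "x \<notin> Iext I p" using assms(6,7,11,12) unfolding Iext_def by auto
  from assms(14) show False
  proof
    assume xz: "x = z"
    hence yw: "y = w" using assms(13) by simp
    have "\<not> a \<le> p" using mono[OF assms(1) _ ak(3)] assms(4,11) xz by blast
    moreover have "\<not> b \<le> q" using mono[OF assms(2) _ ak(4)] assms(5,12) yw by blast
    ultimately show False using assms(3,8) by linarith
  next
    assume r: "x - z \<in> \<Phi>"
    show False
    proof (cases "x - z \<in> P")
      case True
      have "w = y + (x - z)" using assms(13) by (simp add: algebra_simps)
      from Jsplit[OF wP assms(10) True this ak(4) yI(1) assms(2) ak(2) assms(5)]
      have j: "q < b" "x - z \<in> I (b - q)" by auto
      have "z + (x - z) \<in> I (a + (b - q))"
        using Isum[OF assms(1) _ _ assms(4) j(2)] j(1) assms(3,7,8,9) by auto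
      moreover have "a + (b - q) = p" using j(1) assms(3,8) by linarith
      ultimately show False using assms(11) by simp
    next
      case False
      hence sP: "z - x \<in> P" using posneg[OF r] by simp
      have "z = x + (z - x)" by simp
      from Jsplit[OF zP assms(9) sP this ak(3) yI(2) assms(1) ak(1) assms(4)]
      have j: "p < a" "z - x \<in> I (a - p)" by auto
      have "w + (z - x) = y" using assms(13) by (simp add: algebra_simps)
      hence "y \<in> I (b + (a - p))"
        using Isum[OF assms(2) _ _ assms(5) j(2)] j(1) assms(3,6,8,10) by auto
      moreover have "b + (a - p) = q" using j(1) assms(3,8) by linarith
      ultimately show False using assms(12) by simp
    qed
  qed
qed

lemma Core1: assumes "1 \<le> p" "1 \<le> q" "p + q = k + 1" "x \<in> P" "y \<in> P" "x \<notin> I p" "y \<notin> I q"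
  "x + y \<in> P"
  shows "x + y \<notin> E"
proof
  assume xyE: "x + y \<in> E"
  have pk: "p \<le> k" "q \<le> k" using assms(1-3) by auto
  from xyE[unfolded ext_mem] show False
  proof (elim disjE conjE)
    assume "x + y \<in> I k"
    moreover have "x + y \<notin> Iext I (min (p + q) k)"
      using Jc[OF pk assms(4,5) _ _ assms(8)] assms(1,2,6,7) unfolding Iext_def by auto
    ultimately show False using assms(3) k1 unfolding Iext_def by auto
  next
    assume "x + y \<in> S" thus False using simple_not_sum assms(4,5) by blast
  next
    assume "Dec (x + y)"
    then obtain a b z w where d: "1 \<le> a" "1 \<le> b" "a + b = k + 1" "z \<in> I a" "w \<in> I b" "x + y = z + w"
      unfolding Dec_def by blast
    have ak: "a \<le> k" "b \<le> k" using d by auto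
    have zP: "z \<in> \<Phi>" and wP: "w \<in> \<Phi>" using IP ak d PPhi by blast+
    have x: "x \<in> \<Phi>" "y \<in> \<Phi>" "z + w \<in> \<Phi>" using assms(4,5,8) d(6) PPhi by auto
    have yx: "y + x = z + w" using d(6) by (simp add: add.commute)
    have qp: "q + p = k + 1" using assms(3) by simp
    show False
    proof (cases "w \<bullet> w \<le> z \<bullet> z")
      case True
      from L4[OF x(1,2) zP wP x(3) d(6) True] show False
        using H1[OF d(1-5) assms(1,2,3,4,5,6,7) d(6)] H1[OF d(1-5) assms(2,1) qp assms(5,4,7,6) yx] by blast
    next
      case False
      have wz: "w + z \<in> \<Phi>" "x + y = w + z" "y + x = w + z" using x(3) d(6) by (auto simp: add.commute)
      have ba: "b + a = k + 1" using d(3) by simp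
      from L4[OF x(1,2) wP zP wz(1,2)] False show False
        using H1[OF d(2,1) ba d(5,4) assms(1,2,3,4,5,6,7) wz(2)] H1[OF d(2,1) ba d(5,4) assms(2,1) qp assms(5,4,7,6) wz(3)] by auto
    qed
  qed
qed

lemma H2x: assumes "1 \<le> a" "1 \<le> b" "a + b = k + 1" "z \<in> I a" "w \<in> I b"
  "x \<in> P" "y \<in> P" "x \<notin> I k" "\<not> Dec x" "x + y = z + w" "x = z \<or> x - z \<in> \<Phi>"
  shows False
proof -
  have ak: "a \<le> k" "b \<le> k" using assms(1-3) by auto
  have zP: "z \<in> P" and wP: "w \<in> P" using IP ak assms(1,2,4,5) by blast+
  from assms(11) show False
  proof
    assume "x = z" thus False using mono[OF assms(1) ak(1) order_refl] assms(4,8) by blast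
  next
    assume r: "x - z \<in> \<Phi>"
    show False
    proof (cases "x - z \<in> P")
      case True
      have "w = y + (x - z)" using assms(10) by (simp add: algebra_simps)
      from Jsplit[OF wP assms(7) True this _ _ assms(2) ak(2) assms(5), of 0]
      have "x - z \<in> I b" unfolding Iext_def by auto
      hence "Dec x" unfolding Dec_def using assms(1-4)
        by (intro exI[of _ a] exI[of _ b] exI[of _ z] exI[of _ "x - z"]) auto
      thus False using assms(9) by blast
    next
      case False
      hence sP: "z - x \<in> P" using posneg[OF r] by simp
      have "z = x + (z - x)" by simp
      from Jsplit[OF zP assms(6) sP this order_refl _ assms(1) ak(1) assms(4)] assms(8) ak(1)
      show False using k1 unfolding Iext_def by auto
    qed
  qed
qed

lemma H2y: assumes "1 \<le> a" "1 \<le> b" "a + b = k + 1" "z \<in> I a" "w \<in> I b"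
  "x \<in> P" "y \<in> P" "x \<notin> I k" "\<not> Dec x" "x + y = z + w" "y = z \<or> y - z \<in> \<Phi>"
  shows False
proof -
  have ak: "a \<le> k" "b \<le> k" using assms(1-3) by auto
  have zP: "z \<in> P" and wP: "w \<in> P" using IP ak assms(1,2,4,5) by blast+
  from assms(11) show False
  proof
    assume "y = z" hence "x = w" using assms(10) by simp
    thus False using mono[OF assms(2) ak(2) order_refl] assms(5,8) by blast
  next
    assume r: "y - z \<in> \<Phi>"
    show False
    proof (cases "y - z \<in> P")
      case True
      have "w = x + (y - z)" using assms(10) by (simp add: algebra_simps)
      from Jsplit[OF wP assms(6) True this order_refl _ assms(2) ak(2) assms(5)] assms(8) ak(2)
      show False using k1 unfolding Iext_def by auto
    next
      case False
      hence sP: "z - y \<in> P" using posneg[OF r] by simp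
      have "z = y + (z - y)" by simp
      from Jsplit[OF zP assms(7) sP this _ _ assms(1) ak(1) assms(4), of 0]
      have "z - y \<in> I a" unfolding Iext_def by auto
      moreover have "x = w + (z - y)" using assms(10) by (simp add: algebra_simps)
      ultimately have "Dec x" unfolding Dec_def using assms(1-3,5)
        by (intro exI[of _ b] exI[of _ a] exI[of _ w] exI[of _ "z - y"]) auto
      thus False using assms(9) by blast
    qed
  qed
qed

lemma Core2: assumes "x \<in> P" "x \<notin> E" "y \<in> P" "x + y \<in> P"
  shows "x + y \<notin> E"
proof
  assume "x + y \<in> E"
  have xk: "x \<notin> I k" "\<not> Dec x" using assms(1,2) ext_mem by auto
  from \<open>x + y \<in> E\<close>[unfolded ext_mem] show False
  proof (elim disjE conjE)
    assume "x + y \<in> I k"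
    moreover have "x + y \<notin> Iext I (min (k + 0) k)"
      using Jc[of k 0, OF order_refl _ assms(1,3) _ _ assms(4)] xk k1 unfolding Iext_def by auto
    ultimately show False using k1 unfolding Iext_def by auto
  next
    assume "x + y \<in> S" thus False using simple_not_sum assms(1,3) by blast
  next
    assume "Dec (x + y)"
    then obtain a b z w where d: "1 \<le> a" "1 \<le> b" "a + b = k + 1" "z \<in> I a" "w \<in> I b" "x + y = z + w"
      unfolding Dec_def by blast
    have ak: "a \<le> k" "b \<le> k" using d by auto
    have zP: "z \<in> \<Phi>" and wP: "w \<in> \<Phi>" using IP ak d PPhi by blast+
    have x: "x \<in> \<Phi>" "y \<in> \<Phi>" "z + w \<in> \<Phi>" using assms(1,3,4) d(6) PPhi by auto
    show False
    proof (cases "w \<bullet> w \<le> z \<bullet> z")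
      case True
      from L4[OF x(1,2) zP wP x(3) d(6) True] show False
        using H2x[OF d(1-5) assms(1,3) xk d(6)] H2y[OF d(1-5) assms(1,3) xk d(6)] by blast
    next
      case False
      have wz: "w + z \<in> \<Phi>" "x + y = w + z" using x(3) d(6) by (auto simp: add.commute)
      have ba: "b + a = k + 1" using d(3) by simp
      from L4[OF x(1,2) wP zP wz(1,2)] False show False
        using H2x[OF d(2,1) ba d(5,4) assms(1,3) xk wz(2)] H2y[OF d(2,1) ba d(5,4) assms(1,3) xk wz(2)] by auto
    qed
  qed
qed

lemma Ik_E: "I k \<subseteq> E" using ext_mem by blast

lemma I1_E: "I 1 \<subseteq> E" using mono[OF order_refl k1 order_refl] Ik_E by blast

lemma J_new_mem: assumes "i \<le> k + 1" "x \<in> Jext \<Phi> S (k + 1) (chain_ext \<Phi> S k I) i"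
  shows "x \<in> P" "1 \<le> i \<Longrightarrow> x \<notin> I 1" "i = k + 1 \<Longrightarrow> x \<notin> E" "1 \<le> i \<Longrightarrow> i \<le> k \<Longrightarrow> x \<notin> I i"
proof -
  show "x \<in> P" using assms(2) unfolding Jext_def by (auto split: if_splits)
  show "i = k + 1 \<Longrightarrow> x \<notin> E" using assms(2) k1 unfolding Jext_def by auto
  show "1 \<le> i \<Longrightarrow> i \<le> k \<Longrightarrow> x \<notin> I i" using assms(2) ext_le[of i] unfolding Jext_def by auto
  assume i: "1 \<le> i"
  show "x \<notin> I 1"
  proof (cases "i \<le> k")
    case True
    hence "x \<notin> I i" using assms(2) i ext_le[of i] unfolding Jext_def by auto
    thus ?thesis using mono[OF order_refl i True] by blast
  next
    case False
    hence "i = k + 1" using assms(1) by simp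
    hence "x \<notin> E" using assms(2) k1 unfolding Jext_def by auto
    thus ?thesis using I1_E by blast
  qed
qed

lemma ext_geometric: "geometric_chain \<Phi> S (k + 1) (chain_ext \<Phi> S k I)"
  unfolding geometric_chain_def
proof (intro conjI ballI allI impI)
  fix i assume i: "i \<in> {1..k + 1}"
  show "root_ideal \<Phi> S (chain_ext \<Phi> S k I i)"
  proof (cases "i \<le> k")
    case True thus ?thesis using ideal i ext_le by simp
  next
    case False hence "i = k + 1" using i by simp
    thus ?thesis using E_ideal by simp
  qed
next
  fix i assume i: "1 \<le> i \<and> i < k + 1"
  show "chain_ext \<Phi> S k I i \<subseteq> chain_ext \<Phi> S k I (Suc i)"
  proof (cases "i < k")
    case True
    thus ?thesis using gc i ext_le unfolding geometric_chain_def by simp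
  next
    case False hence "i = k" using i by simp
    thus ?thesis using Ik_E ext_le by simp
  qed
next
  fix i j assume ij: "i \<le> k + 1" "j \<le> k + 1" "i + j \<le> k + 1"
  let ?C = "chain_ext \<Phi> S k I"
  show "sumset (Iext ?C i) (Iext ?C j) \<inter> P \<subseteq> Iext ?C (i + j)"
  proof (cases "i + j \<le> k")
    case True
    hence "Iext ?C i = Iext I i" "Iext ?C j = Iext I j" "Iext ?C (i + j) = Iext I (i + j)"
      unfolding Iext_def using ext_le by auto
    thus ?thesis using gc True unfolding geometric_chain_def by auto
  next
    case False
    hence s: "i + j = k + 1" using ij by simp
    show ?thesis
    proof
      fix x assume x: "x \<in> sumset (Iext ?C i) (Iext ?C j) \<inter> P"
      then obtain z w where zw: "z \<in> Iext ?C i" "w \<in> Iext ?C j" "x = z + w" "x \<in> P"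
        unfolding sumset_def by blast
      hence i0: "i \<noteq> 0" "j \<noteq> 0" unfolding Iext_def by (auto split: if_splits)
      hence ik: "i \<le> k" "j \<le> k" using s by auto
      hence "z \<in> I i" "w \<in> I j" using zw i0 ext_le unfolding Iext_def by auto
      hence "Dec x" unfolding Dec_def using zw(3) i0 s
        by (intro exI[of _ i] exI[of _ j] exI[of _ z] exI[of _ w]) auto
      hence "x \<in> E" using ext_mem zw(4) by blast
      thus "x \<in> Iext ?C (i + j)" using s unfolding Iext_def by simp
    qed
  qed
next
  fix i j assume ij: "i \<le> k + 1" "j \<le> k + 1"
  let ?C = "chain_ext \<Phi> S k I"
  let ?J = "Jext \<Phi> S (k + 1) ?C"
  show "sumset (?J i) (?J j) \<inter> P \<subseteq> ?J (i + j)"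
  proof
    fix u assume u: "u \<in> sumset (?J i) (?J j) \<inter> P"
    then obtain x y where xy: "x \<in> ?J i" "y \<in> ?J j" "u = x + y" "u \<in> P"
      unfolding sumset_def by blast
    note X = J_new_mem[OF ij(1) xy(1)]
    note Y = J_new_mem[OF ij(2) xy(2)]
    show "u \<in> ?J (i + j)"
    proof (cases "i + j \<le> k")
      case True
      hence ik: "i \<le> k" "j \<le> k" by auto
      have "x \<notin> Iext I i" using X(4) ik unfolding Iext_def by auto
      moreover have "y \<notin> Iext I j" using Y(4) ik unfolding Iext_def by auto
      ultimately have "u \<notin> Iext I (min (i + j) k)" using Jc[OF ik X(1) Y(1)] xy by auto
      hence "u \<notin> Iext I (i + j)" using True by simp
      thus ?thesis using xy(4) True ext_le unfolding Jext_def Iext_def by auto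
    next
      case False
      have "u \<notin> E"
      proof (cases "i \<le> k \<and> j \<le> k")
        case True
        hence i1: "1 \<le> i" "1 \<le> j" using False by auto
        define q where "q = k + 1 - i"
        have q: "1 \<le> q" "q \<le> j" "i + q = k + 1" using True False unfolding q_def by auto
        have "y \<notin> I q" using Y(4)[OF i1(2)] True mono[OF q(1,2)] by blast
        thus ?thesis using Core1[OF i1(1) q(1,3) X(1) Y(1) X(4)[OF i1(1)]] True xy(3,4) by blast
      next
        case False
        hence "i = k + 1 \<or> j = k + 1" using ij by auto
        thus ?thesis
        proof
          assume ik: "i = k + 1"
          show ?thesis
          proof (cases "j = 0")
            case True thus ?thesis using Core2[OF X(1) X(3)[OF ik] Y(1)] xy by auto
          next
            case False
            have "x \<notin> I k" using X(3)[OF ik] Ik_E by blast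
            thus ?thesis using Core1[OF k1 order_refl _ X(1) Y(1) _ Y(2)] False xy by auto
          qed
        next
          assume jk: "j = k + 1"
          show ?thesis
          proof (cases "i = 0")
            case True thus ?thesis using Core2[OF Y(1) Y(3)[OF jk] X(1)] xy by (auto simp: add.commute)
          next
            case False
            have "y \<notin> I k" using Y(3)[OF jk] Ik_E by blast
            thus ?thesis using Core1[OF order_refl k1 _ X(1) Y(1) X(2)] False xy by auto
          qed
        qed
      qed
      thus ?thesis using xy(4) False unfolding Jext_def by auto
    qed
  qed
qed

end

lemma conv_lt: fixes a b r u :: real assumes "a < r" "b < r" "0 \<le> u" "u \<le> 1"
  shows "(1 - u) * a + u * b < r"
proof -
  have "(1 - u) * a \<le> (1 - u) * max a b" using assms by (intro mult_left_mono) auto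
  moreover have "u * b \<le> u * max a b" using assms by (intro mult_left_mono) auto
  ultimately have "(1 - u) * a + u * b \<le> (1 - u) * max a b + u * max a b" by linarith
  also have "\<dots> = max a b" by (simp add: algebra_simps)
  finally show ?thesis using assms by linarith
qed

lemma conv_gt: fixes a b r u :: real assumes "a > r" "b > r" "0 \<le> u" "u \<le> 1"
  shows "(1 - u) * a + u * b > r"
  using conv_lt[of "-a" "-r" "-b" u] assms by (simp add: algebra_simps)

lemma side: assumes "catalan_region \<Phi> K R" "\<alpha> \<in> \<Phi>" "r \<le> K" "y \<in> R" "z \<in> R" "y \<bullet> \<alpha> < real r"
  shows "z \<bullet> \<alpha> < real r"
proof (rule ccontr)
  assume "\<not> z \<bullet> \<alpha> < real r"
  obtain x0 where x0: "R = connected_component_set (catalan_complement \<Phi> K) x0"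
    using assms(1) unfolding catalan_region_def by blast
  have "connected R" using x0 by simp
  then obtain p where p: "p \<in> R" "\<alpha> \<bullet> p = real r"
    using connected_ivt_hyperplane[of R y z \<alpha> "real r"] assms(4-6) \<open>\<not> z \<bullet> \<alpha> < real r\<close>
    by (auto simp: inner_commute)
  have "p \<in> catalan_complement \<Phi> K" using p(1) x0 connected_component_subset by blast
  thus False using p(2) assms(2,3) unfolding catalan_complement_def by (auto simp: inner_commute)
qed

context rsys begin

lemma bounded_helper: assumes "\<forall>x\<in>X. \<forall>s\<in>S. \<bar>x \<bullet> s\<bar> \<le> B" shows "bounded X"
proof -
  have "\<forall>b. \<exists>u. b = (\<Sum>v\<in>S. u v *\<^sub>R v)"
    using span_finite[OF finS] ss unfolding simple_system_def by auto
  then obtain d where d: "\<And>b. b = (\<Sum>v\<in>S. d b v *\<^sub>R v)" by metis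
  define M where "M = (\<Sum>b\<in>Basis. \<Sum>v\<in>S. \<bar>d b v\<bar> * B)"
  have "\<forall>x\<in>X. norm x \<le> M"
  proof
    fix x assume x: "x \<in> X"
    have "\<bar>x \<bullet> b\<bar> \<le> (\<Sum>v\<in>S. \<bar>d b v\<bar> * B)" for b
    proof -
      have "x \<bullet> b = (\<Sum>v\<in>S. d b v * (x \<bullet> v))" by (subst d[of b]) (simp add: inner_sum_right)
      hence "\<bar>x \<bullet> b\<bar> \<le> (\<Sum>v\<in>S. \<bar>d b v * (x \<bullet> v)\<bar>)" by (simp add: sum_abs)
      also have "\<dots> \<le> (\<Sum>v\<in>S. \<bar>d b v\<bar> * B)"
        using assms x by (intro sum_mono) (simp add: abs_mult mult_left_mono)
      finally show ?thesis .
    qed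
    hence "(\<Sum>b\<in>Basis. \<bar>x \<bullet> b\<bar>) \<le> M" unfolding M_def by (intro sum_mono) auto
    thus "norm x \<le> M" using norm_le_l1[of x] by linarith
  qed
  thus ?thesis unfolding bounded_iff by blast
qed

end

context gch begin

lemma regions: assumes "catalan_region \<Phi> k R" "dominant \<Phi> S R" "\<forall>i\<in>{1..k}. theta \<Phi> S R i = I i"
  "catalan_region \<Phi> (k + 1) R'" "dominant \<Phi> S R'"
  "\<forall>i\<in>{1..k+1}. theta \<Phi> S R' i = chain_ext \<Phi> S k I i"
  shows "bounded R' \<and> R' \<subseteq> R"
proof
  have "\<forall>x\<in>R'. \<forall>s\<in>S. \<bar>x \<bullet> s\<bar> \<le> real (k + 1)"
  proof (intro ballI)
    fix x s assume x: "x \<in> R'" and s: "s \<in> S"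
    have "s \<in> theta \<Phi> S R' (k + 1)" using assms(6) s ext_mem by auto
    hence "x \<bullet> s < real (k + 1)" using x unfolding theta_def by blast
    moreover have "x \<bullet> s > 0" using assms(5) x s SP unfolding dominant_def by blast
    ultimately show "\<bar>x \<bullet> s\<bar> \<le> real (k + 1)" by simp
  qed
  thus "bounded R'" by (rule bounded_helper)
next
  obtain x0 where x0: "x0 \<in> catalan_complement \<Phi> k" "R = connected_component_set (catalan_complement \<Phi> k) x0"
    using assms(1) unfolding catalan_region_def by blast
  have x0R: "x0 \<in> R" using x0 by simp
  obtain x1 where x1: "x1 \<in> catalan_complement \<Phi> (k + 1)" "R' = connected_component_set (catalan_complement \<Phi> (k + 1)) x1"
    using assms(4) unfolding catalan_region_def by blast
  show "R' \<subseteq> R"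
  proof
    fix x assume xR': "x \<in> R'"
    have xC: "x \<in> catalan_complement \<Phi> (k + 1)" using xR' x1(2) connected_component_subset by blast
    have same: "x0 \<bullet> \<alpha> < real r \<longleftrightarrow> x \<bullet> \<alpha> < real r" if a: "\<alpha> \<in> \<Phi>" and r: "r \<le> k" for \<alpha> r
    proof (cases "\<alpha> \<in> P")
      case False
      hence na: "- \<alpha> \<in> P" using posneg[OF a] by simp
      have "x0 \<bullet> (- \<alpha>) > 0" using assms(2) x0R na unfolding dominant_def by blast
      moreover have "x \<bullet> (- \<alpha>) > 0" using assms(5) xR' na unfolding dominant_def by blast
      ultimately show ?thesis by simp
    next
      case True
      show ?thesis
      proof (cases "r = 0")
        case True
        have "x0 \<bullet> \<alpha> > 0" using assms(2) x0R \<open>\<alpha> \<in> P\<close> unfolding dominant_def by blast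
        moreover have "x \<bullet> \<alpha> > 0" using assms(5) xR' \<open>\<alpha> \<in> P\<close> unfolding dominant_def by blast
        ultimately show ?thesis using True by simp
      next
        case False
        hence r1: "r \<in> {1..k}" "r \<in> {1..k+1}" using r by auto
        have th: "theta \<Phi> S R r = I r" "theta \<Phi> S R' r = I r" using assms(3,6) r1 ext_le r by auto
        show ?thesis
        proof (cases "\<alpha> \<in> I r")
          case True
          hence "x0 \<bullet> \<alpha> < real r" "x \<bullet> \<alpha> < real r" using th x0R xR' unfolding theta_def by blast+
          thus ?thesis by simp
        next
          case False
          then obtain y where y: "y \<in> R" "\<not> y \<bullet> \<alpha> < real r" using th(1) \<open>\<alpha> \<in> P\<close> unfolding theta_def by blast
          obtain y' where y': "y' \<in> R'" "\<not> y' \<bullet> \<alpha> < real r" using th(2) \<open>\<alpha> \<in> P\<close> False unfolding theta_def by blast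
          have "\<not> x0 \<bullet> \<alpha> < real r" using side[OF assms(1) a r x0R y(1)] y(2) by blast
          moreover have "\<not> x \<bullet> \<alpha> < real r" using side[OF assms(4) a _ xR' y'(1)] y'(2) r by auto
          ultimately show ?thesis by simp
        qed
      qed
    qed
    have seg: "closed_segment x0 x \<subseteq> catalan_complement \<Phi> k"
    proof
      fix p assume "p \<in> closed_segment x0 x"
      then obtain u where u: "0 \<le> u" "u \<le> 1" "p = (1 - u) *\<^sub>R x0 + u *\<^sub>R x" unfolding closed_segment_def by blast
      show "p \<in> catalan_complement \<Phi> k"
        unfolding catalan_complement_def
      proof (clarsimp)
        fix \<alpha> r assume a: "\<alpha> \<in> \<Phi>" and r: "r \<le> k" and eq: "p \<bullet> \<alpha> = real r"
        have pa: "p \<bullet> \<alpha> = (1 - u) * (x0 \<bullet> \<alpha>) + u * (x \<bullet> \<alpha>)" using u(3) by (simp add: inner_add_left)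
        have n0: "x0 \<bullet> \<alpha> \<noteq> real r" using x0(1) a r unfolding catalan_complement_def by auto
        have n1: "x \<bullet> \<alpha> \<noteq> real r" using xC a r unfolding catalan_complement_def by auto
        show False
        proof (cases "x0 \<bullet> \<alpha> < real r")
          case True
          hence l1: "x \<bullet> \<alpha> < real r" using same[OF a r] by simp
          have "(1 - u) * (x0 \<bullet> \<alpha>) + u * (x \<bullet> \<alpha>) < real r" by (rule conv_lt[OF True l1 u(1,2)])
          thus False using pa eq by linarith
        next
          case False
          hence g0: "x0 \<bullet> \<alpha> > real r" using n0 by simp
          have "\<not> x \<bullet> \<alpha> < real r" using same[OF a r] False by simp
          hence g1: "x \<bullet> \<alpha> > real r" using n1 by simp
          have "(1 - u) * (x0 \<bullet> \<alpha>) + u * (x \<bullet> \<alpha>) > real r" by (rule conv_gt[OF g0 g1 u(1,2)])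
          thus False using pa eq by linarith
        qed
      qed
    qed
    have "closed_segment x0 x \<subseteq> connected_component_set (catalan_complement \<Phi> k) x0"
      by (rule connected_component_maximal) (use seg in auto)
    thus "x \<in> R" using x0(2) by auto
  qed
qed

end

theorem lemma9:
  fixes \<Phi> S :: "'a::euclidean_space set"
    and k :: nat
    and I :: "nat \<Rightarrow> 'a set"
  assumes "crystallographic_root_system \<Phi>"
    and "irreducible_root_system \<Phi>"
    and "simple_system \<Phi> S"
    and "k \<ge> 1"
    and "geometric_chain \<Phi> S k I"
  shows "geometric_chain \<Phi> S (k + 1) (chain_ext \<Phi> S k I)
       \<and> positive_chain S (k + 1) (chain_ext \<Phi> S k I)
       \<and> (\<forall>R R'. catalan_region \<Phi> k R \<and> dominant \<Phi> S R
                  \<and> (\<forall>i\<in>{1..k}. theta \<Phi> S R i = I i)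
                \<and> catalan_region \<Phi> (k + 1) R' \<and> dominant \<Phi> S R'
                  \<and> (\<forall>i\<in>{1..k+1}. theta \<Phi> S R' i = chain_ext \<Phi> S k I i)
                \<longrightarrow> bounded R' \<and> R' \<subseteq> R)"
proof -
  interpret gch \<Phi> S k I
    by unfold_locales (use assms in auto)
  show ?thesis
  proof (intro conjI allI impI)
    show "geometric_chain \<Phi> S (k + 1) (chain_ext \<Phi> S k I)" by (rule ext_geometric)
    show "positive_chain S (k + 1) (chain_ext \<Phi> S k I)"
      unfolding positive_chain_def using ext_mem by blast
  next
    fix R R' assume h: "catalan_region \<Phi> k R \<and> dominant \<Phi> S R
                  \<and> (\<forall>i\<in>{1..k}. theta \<Phi> S R i = I i)
                \<and> catalan_region \<Phi> (k + 1) R' \<and> dominant \<Phi> S R'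
                  \<and> (\<forall>i\<in>{1..k+1}. theta \<Phi> S R' i = chain_ext \<Phi> S k I i)"
    show "bounded R'" using regions h by blast
    show "R' \<subseteq> R" using regions h by blast
  qed
qed

end
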